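(* Let $D>0$, $r\in(0,1)$, $\theta_m=Dr^m$ ($m\in\mathbb N$), $\mathcal B=\mathcal B(\{\theta_m\})$, and $b_1,b_2>0$. There exists $C_4>0$, depending only on $b_1,b_2$ (besides $N,D,r$), such that for all $m,q\in\mathbb N$ with $m\ge2$ and $Dr^{m+1}\le1$ and every $g\in V$ satisfying (H), $\|\mathscr L_g^q-K^{(q)}_{g,m}\|_{\mathcal B\to\mathcal B}\le C_4^q(r^{2m})^q$.
   Context: $\Sigma_{\mathbf A}^+$ is the one-sided Markov shift of an $N\times N$ zero-one aperiodic matrix $\mathbf A$, $\sigma_{\mathbf A}$ the shift. $\mathrm{var}_k(\phi)=\sup\{|\phi(\omega)-\phi(\omega')|:\omega_j=\omega'_j,\ 0\le j\le k-1\}$; $V=\{\phi:\mathrm{var}_k(\phi)^{1/k}\to0\}$. $(\mathscr L_g\phi)(\omega)=\sum_{\sigma_{\mathbf A}\omega'=\omega}e^{g(\omega')}\phi(\omega')$. $\mathcal B(\{\theta_m\})=\{\phi\in V:\exists C\ge0,\ \mathrm{var}_k(\phi)\le C\theta_{k+1}^k\ \forall k\ge0\}$ with norm $\|\phi\|_\infty+\inf C$. Fix a Borel probability $\mu$ charging all nonempty open sets; $(E_m\phi)(\omega)=\mu([\omega|m])^{-1}\int_{[\omega|m]}\phi\,d\mu$, $[\omega|m]=\{\xi:\xi_j=\omega_j,0\le j\le m-1\}$. $K_{g,m}=\mathscr L_g\circ E_m$, $K^{(q)}_{g,m}=\mathscr L_g^q-(\mathscr L_g-K_{g,m})^q$.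 Condition (H) on $g\in V$: $e^{\max\mathrm{Re}\,g}\le b_1$ and $\mathrm{var}_k(g)\le b_2\theta_k^k$ for all $k\in\mathbb N$. *)

theory Defs
  imports "HOL-Probability.Probability"
begin

fun mpow :: "nat \<Rightarrow> (nat \<Rightarrow> nat \<Rightarrow> bool) \<Rightarrow> nat \<Rightarrow> nat \<Rightarrow> nat \<Rightarrow> nat" where
  "mpow N A 0 i j = (if i = j then 1 else 0)"
| "mpow N A (Suc k) i j = (\<Sum>l<N. mpow N A k i l * (if A l j then 1 else 0))"

definition aperiodic :: "nat \<Rightarrow> (nat \<Rightarrow> nat \<Rightarrow> bool) \<Rightarrow> bool" where
  "aperiodic N A \<longleftrightarrow> (\<exists>k. \<forall>i<N. \<forall>j<N. mpow N A k i j > 0)"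

definition Sigma_A :: "nat \<Rightarrow> (nat \<Rightarrow> nat \<Rightarrow> bool) \<Rightarrow> (nat \<Rightarrow> nat) set" where
  "Sigma_A N A = {\<omega>. \<forall>j. \<omega> j < N \<and> A (\<omega> j) (\<omega> (Suc j))}"

definition shift :: "(nat \<Rightarrow> nat) \<Rightarrow> (nat \<Rightarrow> nat)" where
  "shift \<omega> = (\<lambda>j. \<omega> (Suc j))"

definition theta :: "real \<Rightarrow> real \<Rightarrow> nat \<Rightarrow> real" where
  "theta D r m = D * r ^ m"

definition var :: "(nat \<Rightarrow> nat) set \<Rightarrow> nat \<Rightarrow> ((nat \<Rightarrow> nat) \<Rightarrow> complex) \<Rightarrow> real" where
  "var S k \<phi> = Sup {cmod (\<phi> \<omega> - \<phi> \<omega>') | \<omega> \<omega>'. \<omega> \<in> S \<and> \<omega>' \<in> S \<and> (\<forall>j<k. \<omega> j = \<omega>' j)}"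

text \<open>The space V (boundedness on S is implied by the limit condition; it only makes var real-valued).\<close>
definition Vspace :: "(nat \<Rightarrow> nat) set \<Rightarrow> ((nat \<Rightarrow> nat) \<Rightarrow> complex) set" where
  "Vspace S = {\<phi>. bounded (\<phi> ` S) \<and> (\<lambda>k. var S k \<phi> powr (1 / real k)) \<longlonglongrightarrow> 0}"

definition Bspace :: "(nat \<Rightarrow> nat) set \<Rightarrow> real \<Rightarrow> real \<Rightarrow> ((nat \<Rightarrow> nat) \<Rightarrow> complex) set" where
  "Bspace S D r = {\<phi> \<in> Vspace S. \<exists>C\<ge>0. \<forall>k. var S k \<phi> \<le> C * (theta D r (k + 1)) ^ k}"

definition supnorm :: "(nat \<Rightarrow> nat) set \<Rightarrow> ((nat \<Rightarrow> nat) \<Rightarrow> complex) \<Rightarrow> real" where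
  "supnorm S \<phi> = (SUP \<omega>\<in>S. cmod (\<phi> \<omega>))"

definition Bnorm :: "(nat \<Rightarrow> nat) set \<Rightarrow> real \<Rightarrow> real \<Rightarrow> ((nat \<Rightarrow> nat) \<Rightarrow> complex) \<Rightarrow> real" where
  "Bnorm S D r \<phi> = supnorm S \<phi> + Inf {C. C \<ge> 0 \<and> (\<forall>k. var S k \<phi> \<le> C * (theta D r (k + 1)) ^ k)}"

definition transfer :: "(nat \<Rightarrow> nat) set \<Rightarrow> ((nat \<Rightarrow> nat) \<Rightarrow> complex) \<Rightarrow> ((nat \<Rightarrow> nat) \<Rightarrow> complex) \<Rightarrow> (nat \<Rightarrow> nat) \<Rightarrow> complex" where
  "transfer S g \<phi> = (\<lambda>\<omega>. \<Sum>\<omega>'\<in>{\<omega>'\<in>S. shift \<omega>' = \<omega>}. exp (g \<omega>') * \<phi> \<omega>')"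

definition cyl :: "(nat \<Rightarrow> nat) set \<Rightarrow> (nat \<Rightarrow> nat) \<Rightarrow> nat \<Rightarrow> (nat \<Rightarrow> nat) set" where
  "cyl S \<omega> m = {\<xi> \<in> S. \<forall>j<m. \<xi> j = \<omega> j}"

definition condexp :: "(nat \<Rightarrow> nat) measure \<Rightarrow> (nat \<Rightarrow> nat) set \<Rightarrow> nat \<Rightarrow> ((nat \<Rightarrow> nat) \<Rightarrow> complex) \<Rightarrow> (nat \<Rightarrow> nat) \<Rightarrow> complex" where
  "condexp \<mu> S m \<phi> = (\<lambda>\<omega>. set_lebesgue_integral \<mu> (cyl S \<omega> m) \<phi> / complex_of_real (measure \<mu> (cyl S \<omega> m)))"

definition Kop :: "(nat \<Rightarrow> nat) measure \<Rightarrow> (nat \<Rightarrow> nat) set \<Rightarrow> ((nat \<Rightarrow> nat) \<Rightarrow> complex) \<Rightarrow> nat \<Rightarrow> ((nat \<Rightarrow> nat) \<Rightarrow> complex) \<Rightarrow> (nat \<Rightarrow> nat) \<Rightarrow> complex" where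
  "Kop \<mu> S g m = transfer S g \<circ> condexp \<mu> S m"

definition Kq :: "(nat \<Rightarrow> nat) measure \<Rightarrow> (nat \<Rightarrow> nat) set \<Rightarrow> ((nat \<Rightarrow> nat) \<Rightarrow> complex) \<Rightarrow> nat \<Rightarrow> nat \<Rightarrow> ((nat \<Rightarrow> nat) \<Rightarrow> complex) \<Rightarrow> (nat \<Rightarrow> nat) \<Rightarrow> complex" where
  "Kq \<mu> S g m q \<phi> = (transfer S g ^^ q) \<phi> - ((\<lambda>\<psi>. transfer S g \<psi> - Kop \<mu> S g m \<psi>) ^^ q) \<phi>"

definition condH :: "(nat \<Rightarrow> nat) set \<Rightarrow> real \<Rightarrow> real \<Rightarrow> real \<Rightarrow> real \<Rightarrow> ((nat \<Rightarrow> nat) \<Rightarrow> complex) \<Rightarrow> bool" where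
  "condH S D r b1 b2 g \<longleftrightarrow> g \<in> Vspace S \<and> (\<forall>\<omega>\<in>S. exp (Re (g \<omega>)) \<le> b1)
     \<and> (\<forall>k\<ge>1. var S k g \<le> b2 * (theta D r k) ^ k)"

definition admissible_measure :: "(nat \<Rightarrow> nat) set \<Rightarrow> (nat \<Rightarrow> nat) measure \<Rightarrow> bool" where
  "admissible_measure S \<mu> \<longleftrightarrow> sets \<mu> = sets borel \<and> prob_space \<mu> \<and> emeasure \<mu> S = 1
     \<and> (\<forall>U. open U \<and> U \<inter> S \<noteq> {} \<longrightarrow> emeasure \<mu> (U \<inter> S) > 0)"

end

theory Submission imports Defs begin

lemma var_le:
  assumes "S \<noteq> {}"
    and "\<And>\<omega> \<omega>'. \<omega>\<in>S \<Longrightarrow> \<omega>'\<in>S \<Longrightarrow> \<forall>j<k. \<omega> j = \<omega>' j \<Longrightarrow> cmod (\<phi> \<omega> - \<phi> \<omega>') \<le> c"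
  shows "var S k \<phi> \<le> c"
  unfolding var_def using assms by (intro cSup_least) auto

lemma bounded_S_iff: "bounded (\<phi> ` S) \<longleftrightarrow> (\<exists>B. \<forall>x\<in>S. cmod (\<phi> x) \<le> B)"
  by (auto simp: bounded_iff)

lemma var_ge:
  assumes "bounded (\<phi> ` S)" "\<omega>\<in>S" "\<omega>'\<in>S" "\<forall>j<k. \<omega> j = \<omega>' j"
  shows "cmod (\<phi> \<omega> - \<phi> \<omega>') \<le> var S k \<phi>"
proof -
  obtain B where B: "\<forall>x\<in>S. cmod (\<phi> x) \<le> B" using assms(1) by (auto simp: bounded_iff)
  have "bdd_above {cmod (\<phi> \<omega> - \<phi> \<omega>') | \<omega> \<omega>'. \<omega> \<in> S \<and> \<omega>' \<in> S \<and> (\<forall>j<k. \<omega> j = \<omega>' j)}"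
  proof (rule bdd_aboveI[where M="2*B"], clarify)
    fix x y assume "x\<in>S" "y\<in>S"
    then have "cmod (\<phi> x) \<le> B" "cmod (\<phi> y) \<le> B" using B by auto
    then show "cmod (\<phi> x - \<phi> y) \<le> 2*B" using norm_triangle_ineq4[of "\<phi> x" "\<phi> y"] by linarith
  qed
  then show ?thesis unfolding var_def using assms by (intro cSup_upper) auto
qed

lemma var_nonneg: "bounded (\<phi> ` S) \<Longrightarrow> S \<noteq> {} \<Longrightarrow> 0 \<le> var S k \<phi>"
  using var_ge[of \<phi> S _ _ k] by force

lemma open_cylset: "open {\<xi>::nat\<Rightarrow>nat. \<forall>j<m. \<xi> j = \<omega> j}"
proof -
  have "open {f::nat\<Rightarrow>nat. \<forall>i\<in>{..<m}. f (id i) \<in> {\<omega> i}}"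
    by (rule product_topology_basis'[where x=id and U="\<lambda>i. {\<omega> i}" and I="{..<m}"]) (simp_all add: discrete_topology_class.open_discrete)
  moreover have "{f::nat\<Rightarrow>nat. \<forall>i\<in>{..<m}. f (id i) \<in> {\<omega> i}} = {\<xi>. \<forall>j<m. \<xi> j = \<omega> j}" by auto
  ultimately show ?thesis by simp
qed

lemma var_small:
  assumes "\<phi> \<in> Vspace S" "e > 0"
  shows "\<exists>k. var S k \<phi> < e"
proof -
  have lim: "(\<lambda>k. var S k \<phi> powr (1 / real k)) \<longlonglongrightarrow> 0" using assms unfolding Vspace_def by auto
  have "eventually (\<lambda>k. var S k \<phi> powr (1 / real k) < 1/2) sequentially"
    using order_tendstoD(2)[OF lim, of "1/2"] by simp
  moreover have "eventually (\<lambda>k. (1/2::real)^k < e) sequentially"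
    using order_tendstoD(2)[OF LIMSEQ_power_zero[of "1/2::real"] assms(2)] by simp
  moreover have "eventually (\<lambda>k. k \<ge> 1) sequentially" by (rule eventually_ge_at_top)
  ultimately obtain k where k: "var S k \<phi> powr (1 / real k) < 1/2" "(1/2::real)^k < e" "k \<ge> 1"
    by (metis (mono_tags, lifting) eventually_sequentially order_refl eventually_conj_iff)
  show ?thesis
  proof (cases "var S k \<phi> \<le> 0")
    case True then have "var S k \<phi> < e" using assms(2) by linarith
    then show ?thesis by blast
  next
    case False
    let ?v = "var S k \<phi>"
    have "?v = (?v powr (1 / real k)) powr (real k)"
      using False k(3) by (simp add: powr_powr)
    also have "\<dots> = (?v powr (1 / real k)) ^ k" using False by (simp add: powr_realpow)
    also have "\<dots> < (1/2)^k" using k(1) k(3) by (intro power_strict_mono) auto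
    finally have "var S k \<phi> < e" using k(2) by linarith
    then show ?thesis by blast
  qed
qed

lemma V_cont:
  assumes "\<phi> \<in> Vspace S"
  shows "continuous_on S \<phi>"
  unfolding continuous_on_topological
proof (intro ballI allI impI)
  fix x B assume x: "x \<in> S" and B0: "open B" and B1: "\<phi> x \<in> B"
  from B0 B1 have B: "open B \<and> \<phi> x \<in> B" by simp
  then obtain e where e: "e > 0" "ball (\<phi> x) e \<subseteq> B" using openE by blast
  obtain k where k: "var S k \<phi> < e" using var_small[OF assms e(1)] by blast
  have bd: "bounded (\<phi> ` S)" using assms unfolding Vspace_def by auto
  have "\<forall>y\<in>S. y \<in> {\<xi>. \<forall>j<k. \<xi> j = x j} \<longrightarrow> \<phi> y \<in> B"
  proof (intro ballI impI)
    fix y assume "y \<in> S" "y \<in> {\<xi>. \<forall>j<k. \<xi> j = x j}"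
    then have "cmod (\<phi> x - \<phi> y) \<le> var S k \<phi>" using var_ge[OF bd x] by auto
    then have "\<phi> y \<in> ball (\<phi> x) e" using k by (simp add: dist_norm)
    then show "\<phi> y \<in> B" using e by auto
  qed
  then show "\<exists>A. open A \<and> x \<in> A \<and> (\<forall>y\<in>S. y \<in> A \<longrightarrow> \<phi> y \<in> B)"
    using open_cylset[of k x] by blast
qed


lemma cyl_eq: "cyl S \<omega> m = {\<xi>. \<forall>j<m. \<xi> j = \<omega> j} \<inter> S"
  unfolding cyl_def by auto

lemma cyl_meas:
  assumes adm: "admissible_measure S \<mu>" and w: "\<omega> \<in> S"
  shows "cyl S \<omega> m \<in> sets \<mu>" "measure \<mu> (cyl S \<omega> m) > 0"
proof -
  have ps: "prob_space \<mu>" using adm unfolding admissible_measure_def by auto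
  then interpret prob_space \<mu> .
  have pos: "emeasure \<mu> (cyl S \<omega> m) > 0"
    using adm w open_cylset[of m \<omega>] unfolding admissible_measure_def cyl_eq by blast
  then show sm: "cyl S \<omega> m \<in> sets \<mu>" using emeasure_notin_sets by force
  show "measure \<mu> (cyl S \<omega> m) > 0"
    using pos emeasure_eq_measure[of "cyl S \<omega> m"] by simp
qed

lemma condexp_close:
  assumes adm: "admissible_measure S \<mu>" and V: "\<psi> \<in> Vspace S" and w: "\<omega> \<in> S"
  shows "cmod (condexp \<mu> S m \<psi> \<omega> - \<psi> \<omega>) \<le> var S m \<psi>"
proof -
  have ps: "prob_space \<mu>" and sb: "sets \<mu> = sets borel"
    using adm unfolding admissible_measure_def by auto
  interpret prob_space \<mu> by (rule ps)
  define X where "X = cyl S \<omega> m"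
  have Xs: "X \<in> sets \<mu>" and Mpos: "measure \<mu> X > 0" using cyl_meas[OF adm w] X_def by auto
  have XS: "X \<subseteq> S" unfolding X_def cyl_def by auto
  have bd: "bounded (\<psi> ` S)" using V unfolding Vspace_def by auto
  then obtain B where B: "\<forall>x\<in>S. cmod (\<psi> x) \<le> B" by (auto simp: bounded_iff)
  have cont: "continuous_on X \<psi>" using V_cont[OF V] XS continuous_on_subset by blast
  have "(\<lambda>x. indicator X x *\<^sub>R \<psi> x) \<in> borel_measurable borel"
    using Xs sb cont by (intro borel_measurable_continuous_on_indicator) auto
  then have meas: "(\<lambda>x. indicator X x *\<^sub>R \<psi> x) \<in> borel_measurable \<mu>"
    using measurable_cong_sets[OF sb refl, of borel] by metis
  have int1: "integrable \<mu> (\<lambda>x. indicator X x *\<^sub>R \<psi> x)"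
  proof (rule integrable_const_bound[where B=B])
    show "AE x in \<mu>. norm (indicator X x *\<^sub>R \<psi> x) \<le> B"
    proof (rule AE_I2)
      fix x show "norm (indicator X x *\<^sub>R \<psi> x) \<le> B"
        using B XS by (cases "x \<in> X") (auto, meson norm_ge_zero order_trans B \<open>\<omega>\<in>S\<close>)
    qed
  qed (rule meas)
  have int2: "integrable \<mu> (\<lambda>x. indicator X x *\<^sub>R \<psi> \<omega>)"
    by (rule integrable_mult_indicator[OF Xs]) simp
  define h where "h x = indicator X x *\<^sub>R \<psi> x - indicator X x *\<^sub>R \<psi> \<omega>" for x
  have inth: "integrable \<mu> h" unfolding h_def using int1 int2 by simp
  have Ih: "integral\<^sup>L \<mu> h = set_lebesgue_integral \<mu> X \<psi> - measure \<mu> X *\<^sub>R \<psi> \<omega>"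
    unfolding h_def set_lebesgue_integral_def
    using int1 int2 set_integral_const[OF Xs, of "\<psi> \<omega>"] by (simp add: set_lebesgue_integral_def)
  have int3: "integrable \<mu> (\<lambda>x. indicator X x * var S m \<psi>)"
    using integrable_mult_indicator[OF Xs, of "\<lambda>_. var S m \<psi>"] by simp
  have "norm (integral\<^sup>L \<mu> h) \<le> (\<integral>x. norm (h x) \<partial>\<mu>)" by (rule integral_norm_bound)
  also have "\<dots> \<le> (\<integral>x. indicator X x * var S m \<psi> \<partial>\<mu>)"
  proof (rule integral_mono)
    show "integrable \<mu> (\<lambda>x. norm (h x))" using inth by simp
    show "integrable \<mu> (\<lambda>x. indicator X x * var S m \<psi>)" by (rule int3)
    fix x show "norm (h x) \<le> indicator X x * var S m \<psi>"
    proof (cases "x \<in> X")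
      case True
      then have "x \<in> S" "\<forall>j<m. x j = \<omega> j" unfolding X_def cyl_def by auto
      then have "cmod (\<psi> x - \<psi> \<omega>) \<le> var S m \<psi>" using var_ge[OF bd _ w] by auto
      then show ?thesis using True unfolding h_def by simp
    qed (simp add: h_def)
  qed
  also have "\<dots> = measure \<mu> X * var S m \<psi>"
    using Xs by simp
  finally have nb: "norm (integral\<^sup>L \<mu> h) \<le> measure \<mu> X * var S m \<psi>" .
  have "condexp \<mu> S m \<psi> \<omega> - \<psi> \<omega> = integral\<^sup>L \<mu> h / complex_of_real (measure \<mu> X)"
    unfolding condexp_def Ih X_def[symmetric] using Mpos
    by (simp add: field_simps scaleR_conv_of_real)
  then have "cmod (condexp \<mu> S m \<psi> \<omega> - \<psi> \<omega>) = norm (integral\<^sup>L \<mu> h) / measure \<mu> X"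
    using Mpos by (simp add: norm_divide)
  also have "\<dots> \<le> var S m \<psi>" using nb Mpos by (simp add: divide_le_eq mult.commute)
  finally show ?thesis .
qed


lemma Sigma_cons:
  assumes "\<omega> \<in> Sigma_A N A"
  shows "case_nat a \<omega> \<in> Sigma_A N A \<longleftrightarrow> a < N \<and> A a (\<omega> 0)"
proof
  assume "case_nat a \<omega> \<in> Sigma_A N A"
  then have "case_nat a \<omega> 0 < N \<and> A (case_nat a \<omega> 0) (case_nat a \<omega> (Suc 0))"
    unfolding Sigma_A_def by blast
  then show "a < N \<and> A a (\<omega> 0)" by simp
next
  assume a: "a < N \<and> A a (\<omega> 0)"
  show "case_nat a \<omega> \<in> Sigma_A N A" unfolding Sigma_A_def
  proof (intro CollectI allI)
    fix j show "case_nat a \<omega> j < N \<and> A (case_nat a \<omega> j) (case_nat a \<omega> (Suc j))"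
      using a assms unfolding Sigma_A_def by (cases j) auto
  qed
qed

lemma transfer_eq:
  assumes w: "\<omega> \<in> Sigma_A N A"
  shows "transfer (Sigma_A N A) g f \<omega> =
     (\<Sum>a\<in>{a. a<N \<and> A a (\<omega> 0)}. exp (g (case_nat a \<omega>)) * f (case_nat a \<omega>))"
proof -
  have img: "{\<omega>'\<in>Sigma_A N A. shift \<omega>' = \<omega>} = (\<lambda>a. case_nat a \<omega>) ` {a. a<N \<and> A a (\<omega> 0)}"
  proof (intro set_eqI iffI)
    fix x assume x: "x \<in> {\<omega>'\<in>Sigma_A N A. shift \<omega>' = \<omega>}"
    have xe: "x = case_nat (x 0) \<omega>"
    proof (rule ext)
      fix j show "x j = case_nat (x 0) \<omega> j"
      proof (cases j)
        case (Suc i)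
        have "shift x i = \<omega> i" using x by simp
        then show ?thesis using Suc by (simp add: shift_def)
      qed simp
    qed
    then have "x 0 < N \<and> A (x 0) (\<omega> 0)" using x Sigma_cons[OF w, of "x 0"] by auto
    then show "x \<in> (\<lambda>a. case_nat a \<omega>) ` {a. a<N \<and> A a (\<omega> 0)}" using xe by blast
  next
    fix x assume "x \<in> (\<lambda>a. case_nat a \<omega>) ` {a. a<N \<and> A a (\<omega> 0)}"
    then obtain a where a: "a < N" "A a (\<omega> 0)" "x = case_nat a \<omega>" by blast
    then show "x \<in> {\<omega>'\<in>Sigma_A N A. shift \<omega>' = \<omega>}"
      using Sigma_cons[OF w, of a] by (auto simp: shift_def)
  qed
  have inj: "inj_on (\<lambda>a. case_nat a \<omega>) {a. a<N \<and> A a (\<omega> 0)}"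
  proof (rule inj_onI)
    fix a b assume "case_nat a \<omega> = case_nat b \<omega>"
    from fun_cong[OF this, of 0] show "a = b" by simp
  qed
  show ?thesis unfolding transfer_def img sum.reindex[OF inj] by simp
qed

lemma card_idx: "card {a. a<N \<and> P a} \<le> N"
  using card_mono[of "{..<N}" "{a. a<N \<and> P a}"] by auto

lemma sum_norm_card:
  assumes "\<And>a. a \<in> I \<Longrightarrow> cmod (F a) \<le> c" "finite I" "card I \<le> N" "c \<ge> 0"
  shows "cmod (\<Sum>a\<in>I. F a) \<le> N * c"
proof -
  have "cmod (\<Sum>a\<in>I. F a) \<le> (\<Sum>a\<in>I. cmod (F a))" by (rule norm_sum)
  also have "\<dots> \<le> (\<Sum>a\<in>I. c)" using assms(1) by (rule sum_mono)
  also have "\<dots> = card I * c" by simp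
  also have "\<dots> \<le> N * c" using assms(3,4) by (simp add: mult_right_mono)
  finally show ?thesis .
qed

lemma transfer_sup:
  assumes w: "\<omega> \<in> Sigma_A N A" and g: "\<forall>x\<in>Sigma_A N A. exp (Re (g x)) \<le> b1"
    and f: "\<forall>x\<in>Sigma_A N A. cmod (f x) \<le> M" and M: "M \<ge> 0"
  shows "cmod (transfer (Sigma_A N A) g f \<omega>) \<le> N * (b1 * M)"
  unfolding transfer_eq[OF w]
proof (rule sum_norm_card)
  fix a assume a: "a \<in> {a. a<N \<and> A a (\<omega> 0)}"
  then have x: "case_nat a \<omega> \<in> Sigma_A N A" using Sigma_cons[OF w] by auto
  show "cmod (exp (g (case_nat a \<omega>)) * f (case_nat a \<omega>)) \<le> b1 * M"
    unfolding norm_mult norm_exp_eq_Re using g f x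
    by (intro mult_mono) (auto intro: order_trans[OF exp_ge_zero])
next
  show "0 \<le> b1 * M" using g w M by (meson exp_ge_zero order_trans zero_le_mult_iff)
qed (auto intro: card_idx)

lemma transfer_var:
  assumes w: "\<omega> \<in> Sigma_A N A" and w': "\<omega>' \<in> Sigma_A N A" and k: "k \<ge> 1"
    and agree: "\<forall>j<k. \<omega> j = \<omega>' j"
    and F: "\<And>x y. x\<in>Sigma_A N A \<Longrightarrow> y\<in>Sigma_A N A \<Longrightarrow> \<forall>j<Suc k. x j = y j \<Longrightarrow>
              cmod (exp (g x) * f x - exp (g y) * f y) \<le> c"
    and c: "c \<ge> 0"
  shows "cmod (transfer (Sigma_A N A) g f \<omega> - transfer (Sigma_A N A) g f \<omega>') \<le> N * c"
proof -
  have e0: "\<omega>' 0 = \<omega> 0" using agree k by auto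
  have "transfer (Sigma_A N A) g f \<omega> - transfer (Sigma_A N A) g f \<omega>' =
     (\<Sum>a\<in>{a. a<N \<and> A a (\<omega> 0)}. exp (g (case_nat a \<omega>)) * f (case_nat a \<omega>)
        - exp (g (case_nat a \<omega>')) * f (case_nat a \<omega>'))"
    unfolding transfer_eq[OF w] transfer_eq[OF w'] e0 sum_subtractf ..
  also have "cmod \<dots> \<le> N * c"
  proof (rule sum_norm_card)
    fix a assume a: "a \<in> {a. a<N \<and> A a (\<omega> 0)}"
    then have x: "case_nat a \<omega> \<in> Sigma_A N A" "case_nat a \<omega>' \<in> Sigma_A N A"
      using Sigma_cons[OF w] Sigma_cons[OF w'] e0 by auto
    have "\<forall>j<Suc k. case_nat a \<omega> j = case_nat a \<omega>' j"
      using agree by (auto split: nat.split)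
    then show "cmod (exp (g (case_nat a \<omega>)) * f (case_nat a \<omega>) - exp (g (case_nat a \<omega>')) * f (case_nat a \<omega>')) \<le> c"
      using F x by blast
  qed (auto intro: card_idx c)
  finally show ?thesis .
qed

lemma exp_diff:
  assumes "Re a \<le> ln b1" "Re b \<le> ln b1" "b1 > 0"
  shows "cmod (exp a - exp b) \<le> b1 * cmod (a - b)"
proof (rule field_differentiable_bound[where S="{z. Re z \<le> ln b1}" and f'=exp])
  show "convex {z. Re z \<le> ln b1}" by (rule convex_halfspace_Re_le)
  fix z assume z: "z \<in> {z. Re z \<le> ln b1}"
  show "(exp has_field_derivative exp z) (at z within {z. Re z \<le> ln b1})"
    by (rule has_field_derivative_at_within[OF DERIV_exp])
  have "exp (Re z) \<le> exp (ln b1)" using z by simp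
  then show "cmod (exp z) \<le> b1" using assms(3) by (simp add: norm_exp_eq_Re)
qed (use assms in auto)


lemma theta_pow: "theta D r j ^ n = D^n * r^(j*n)"
  by (simp add: theta_def power_mult_distrib power_mult)

lemma theta_pos: "D > 0 \<Longrightarrow> r > 0 \<Longrightarrow> theta D r j ^ n > 0"
  by (simp add: theta_def)

lemma N2:
  assumes "k \<ge> m" "D > 0" "0 < r" "r < 1"
  shows "theta D r (k+2) ^ (k+1) \<le> D * r^(2*m) * theta D r (k+1) ^ k"
proof -
  have "r^((k+2)*(k+1)) \<le> r^(2*m + (k+1)*k)"
    using assms by (intro power_decreasing) (auto simp: algebra_simps)
  then have "D^(k+1) * r^((k+2)*(k+1)) \<le> D^(k+1) * r^(2*m + (k+1)*k)"
    using assms by (intro mult_left_mono) auto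
  also have "\<dots> = D * r^(2*m) * (D^k * r^((k+1)*k))"
    by (simp add: power_add)
  finally show ?thesis unfolding theta_pow .
qed

lemma N3:
  assumes "k \<ge> m" "D > 0" "0 < r" "r < 1" "D * r^(m+1) \<le> 1"
  shows "theta D r (k+1) ^ (k+1) \<le> theta D r (k+1) ^ k"
proof -
  have "D * r^(k+1) \<le> D * r^(m+1)"
    using assms by (intro mult_left_mono power_decreasing) auto
  then have x: "D * r^(k+1) \<le> 1" using assms by linarith
  have "theta D r (k+1) ^ (k+1) = theta D r (k+1) ^ k * (D * r^(k+1))"
    by (simp add: theta_def)
  also have "\<dots> \<le> theta D r (k+1) ^ k * 1"
    using x assms by (intro mult_left_mono) (auto simp: theta_def)
  finally show ?thesis by simp
qed

lemma N1:
  assumes "k < m" "m \<ge> 2" "D > 0" "0 < r" "r < 1" "D * r^(m+1) \<le> 1"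
  shows "theta D r (m+1) ^ m \<le> (D + D^2) * r^(2*m) * theta D r (k+1) ^ k"
proof (cases "k = m - 1")
  case True
  then have m: "m = k + 1" using assms by auto
  have "theta D r (m+1) ^ m = D * r^(2*m) * theta D r (k+1) ^ k"
    unfolding theta_pow m by (simp add: power_add algebra_simps power_mult_distrib power_mult power2_eq_square)
  also have "\<dots> \<le> (D + D^2) * r^(2*m) * theta D r (k+1) ^ k"
    using assms theta_pos[of D r "k+1" k] by (intro mult_right_mono) auto
  finally show ?thesis .
next
  case False
  then have km: "2 \<le> m - k" using assms by auto
  define x where "x = D * r^(m+1)"
  have x0: "0 \<le> x" using assms by (simp add: x_def)
  have x1: "x \<le> 1" using assms by (simp add: x_def)
  have "theta D r (m+1) ^ m = x^k * x^(m-k)"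
    unfolding theta_def x_def using assms by (simp add: power_add[symmetric])
  also have "\<dots> \<le> theta D r (k+1) ^ k * (D^2 * r^(2*m))"
  proof (rule mult_mono)
    show "x^k \<le> theta D r (k+1) ^ k" unfolding x_def theta_def
      using assms by (intro power_mono mult_left_mono power_decreasing) auto
    have "x^(m-k) \<le> x^2" using km x0 x1 by (rule power_decreasing)
    also have "x^2 = D^2 * r^(2*m) * r^2" unfolding x_def
      by (simp add: power_mult_distrib power_mult[symmetric] power_add algebra_simps)
    also have "\<dots> \<le> D^2 * r^(2*m) * 1"
      using assms by (intro mult_left_mono) (auto simp: power_le_one)
    finally show "x^(m-k) \<le> D^2 * r^(2*m)" by simp
  qed (use x0 assms in \<open>auto simp: theta_def\<close>)
  also have "\<dots> \<le> (D + D^2) * r^(2*m) * theta D r (k+1) ^ k"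
    using assms theta_pos[of D r "k+1" k]
    by (simp add: algebra_simps mult_right_mono)
  finally show ?thesis .
qed


lemma adm_nonempty: "admissible_measure S \<mu> \<Longrightarrow> S \<noteq> {}"
  unfolding admissible_measure_def by auto

lemma step_core:
  assumes SA: "S = Sigma_A N A"
    and D: "D > 0" and r0: "0 < r" and r1: "r < 1" and b1: "b1 > 0" and b2: "b2 > 0"
    and adm: "admissible_measure S \<mu>" and m2: "m \<ge> 2" and Dm: "D * r^(m+1) \<le> 1"
    and H: "condH S D r b1 b2 g" and V: "\<psi> \<in> Vspace S" and C: "C \<ge> 0"
    and Cv: "\<forall>k. var S k \<psi> \<le> C * theta D r (k+1) ^ k"
  defines "a \<equiv> real N * b1 * (2*(D+D^2) + D + (D+D^2)*b2)"
  shows "\<forall>\<omega>\<in>S. cmod ((transfer S g \<psi> - Kop \<mu> S g m \<psi>) \<omega>) \<le> a * C * r^(2*m)"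
    and "\<forall>k. var S k (transfer S g \<psi> - Kop \<mu> S g m \<psi>) \<le> a * C * r^(2*m) * theta D r (k+1) ^ k"
proof -
  have Sne: "S \<noteq> {}" using adm_nonempty[OF adm] .
  have bdpsi: "bounded (\<psi> ` S)" using V unfolding Vspace_def by auto
  define f where "f x = \<psi> x - condexp \<mu> S m \<psi> x" for x
  define \<delta> where "\<delta> = theta D r (m+1) ^ m"
  define E where "E = D + D^2"
  define \<rho> where "\<rho> = r^(2*m)"
  have E0: "E \<ge> 0" and rho0: "\<rho> \<ge> 0" using D r0 by (auto simp: E_def \<rho>_def)
  have Tf: "(transfer S g \<psi> - Kop \<mu> S g m \<psi>) \<omega> = transfer S g f \<omega>" for \<omega>
    unfolding Kop_def transfer_def f_def fun_diff_def comp_def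
    by (simp add: sum_subtractf right_diff_distrib)
  have fsup: "cmod (f x) \<le> C * \<delta>" if "x \<in> S" for x
  proof -
    have "cmod (f x) = cmod (condexp \<mu> S m \<psi> x - \<psi> x)" unfolding f_def by (simp add: norm_minus_commute)
    also have "\<dots> \<le> var S m \<psi>" by (rule condexp_close[OF adm V that])
    also have "\<dots> \<le> C * \<delta>" using Cv \<delta>_def by auto
    finally show ?thesis .
  qed
  have fvar: "cmod (f x - f y) \<le> C * theta D r (k+1) ^ k"
    if "x \<in> S" "y \<in> S" "\<forall>j<k. x j = y j" "k \<ge> m" for x y k
  proof -
    have "cyl S x m = cyl S y m" using that unfolding cyl_def by auto
    then have "f x - f y = \<psi> x - \<psi> y" unfolding f_def condexp_def by simp
    then have "cmod (f x - f y) \<le> var S k \<psi>" using var_ge[OF bdpsi that(1,2,3)] by simp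
    then show ?thesis using Cv by (meson order_trans)
  qed
  have gb: "\<forall>x\<in>S. exp (Re (g x)) \<le> b1" and gV: "g \<in> Vspace S"
    and gvar: "\<forall>k\<ge>1. var S k g \<le> b2 * theta D r k ^ k"
    using H unfolding condH_def by auto
  have bdg: "bounded (g ` S)" using gV unfolding Vspace_def by auto
  have gRe: "Re (g x) \<le> ln b1" if "x \<in> S" for x
    using gb that b1 by (metis exp_le_cancel_iff exp_ln)
  have dE: "\<delta> \<le> E * \<rho>"
    using N1[of 0 m D r] m2 D r0 r1 Dm unfolding \<delta>_def E_def \<rho>_def theta_def by simp
  have C\<delta>: "0 \<le> C * \<delta>" using C D r0 by (simp add: \<delta>_def theta_def)
  have a0: "a \<ge> real N * b1 * (2*E)" "a \<ge> real N * b1 * (D + E*b2)"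
  proof -
    have Nb: "0 \<le> real N * b1" using b1 by simp
    have h1: "2*E \<le> 2*E + D + E*b2" and h2: "D + E*b2 \<le> 2*E + D + E*b2" using E0 b2 D by auto
    show "a \<ge> real N * b1 * (2*E)"
      unfolding a_def E_def[symmetric] by (rule mult_left_mono[OF h1 Nb])
    show "a \<ge> real N * b1 * (D + E*b2)"
      unfolding a_def E_def[symmetric] by (rule mult_left_mono[OF h2 Nb])
  qed
  have sup1: "cmod (transfer S g f \<omega>) \<le> real N * (b1 * (C * \<delta>))" if "\<omega> \<in> S" for \<omega>
    using transfer_sup[of \<omega> N A g b1 f "C*\<delta>"] that SA gb fsup C\<delta> by auto
  have sup2: "real N * (b1 * (C * \<delta>)) \<le> real N * b1 * E * C * \<rho>"
  proof -
    have "C * \<delta> \<le> C * (E * \<rho>)" by (rule mult_left_mono[OF dE C])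
    then have "b1 * (C * \<delta>) \<le> b1 * (C * (E * \<rho>))" by (rule mult_left_mono) (use b1 in auto)
    then have "real N * (b1 * (C * \<delta>)) \<le> real N * (b1 * (C * (E * \<rho>)))" by (rule mult_left_mono) auto
    then show ?thesis by (simp add: algebra_simps)
  qed
  have NbE0: "0 \<le> real N * b1 * E * C * \<rho>" using b1 E0 C rho0 by simp
  show "\<forall>\<omega>\<in>S. cmod ((transfer S g \<psi> - Kop \<mu> S g m \<psi>) \<omega>) \<le> a * C * r^(2*m)"
  proof
    fix \<omega> assume w: "\<omega> \<in> S"
    have "real N * b1 * E * C * \<rho> \<le> a * C * \<rho>"
    proof -
      have "real N * b1 * E \<le> real N * b1 * (2*E)" by (rule mult_left_mono) (use b1 E0 in auto)
      then have h: "real N * b1 * E \<le> a" using a0(1) by linarith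
      show ?thesis by (rule mult_right_mono[OF mult_right_mono[OF h C] rho0])
    qed
    then show "cmod ((transfer S g \<psi> - Kop \<mu> S g m \<psi>) \<omega>) \<le> a * C * r^(2*m)"
      unfolding Tf \<rho>_def[symmetric] using sup1[OF w] sup2 by linarith
  qed
  show "\<forall>k. var S k (transfer S g \<psi> - Kop \<mu> S g m \<psi>) \<le> a * C * r^(2*m) * theta D r (k+1) ^ k"
  proof
    fix k
    define \<Theta> where "\<Theta> = theta D r (k+1) ^ k"
    have Th0: "\<Theta> > 0" unfolding \<Theta>_def using theta_pos D r0 by simp
    show "var S k (transfer S g \<psi> - Kop \<mu> S g m \<psi>) \<le> a * C * r^(2*m) * theta D r (k+1) ^ k"
      unfolding \<Theta>_def[symmetric] \<rho>_def[symmetric]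
    proof (cases "k < m")
      case True
      have dk: "\<delta> \<le> E * \<rho> * \<Theta>"
        using N1[OF True m2 D r0 r1 Dm] unfolding \<delta>_def E_def \<rho>_def \<Theta>_def .
      show "var S k (transfer S g \<psi> - Kop \<mu> S g m \<psi>) \<le> a * C * \<rho> * \<Theta>"
      proof (rule var_le[OF Sne])
        fix x y assume xy: "x \<in> S" "y \<in> S"
        have "cmod (transfer S g f x - transfer S g f y) \<le> cmod (transfer S g f x) + cmod (transfer S g f y)"
          by (rule norm_triangle_ineq4)
        also have "\<dots> \<le> 2 * (real N * (b1 * (C * \<delta>)))" using sup1[OF xy(1)] sup1[OF xy(2)] by linarith
        also have "\<dots> \<le> 2 * (real N * (b1 * (C * (E * \<rho> * \<Theta>))))"
          using dk b1 C by (intro mult_left_mono) auto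
        also have "\<dots> = (real N * b1 * (2 * E)) * C * \<rho> * \<Theta>" by (simp add: algebra_simps)
        also have "\<dots> \<le> a * C * \<rho> * \<Theta>"
          using a0(1) C rho0 Th0 by (intro mult_right_mono) auto
        finally show "cmod ((transfer S g \<psi> - Kop \<mu> S g m \<psi>) x - (transfer S g \<psi> - Kop \<mu> S g m \<psi>) y) \<le> a * C * \<rho> * \<Theta>"
          unfolding Tf .
      qed
    next
      case False
      then have km: "k \<ge> m" by simp
      then have k1: "k \<ge> 1" using m2 by simp
      define c where "c = b1 * (C * theta D r (k+2) ^ (k+1)) + C * \<delta> * (b1 * (b2 * theta D r (k+1) ^ (k+1)))"
      have c0: "c \<ge> 0"
      proof -
        have t1: "0 \<le> theta D r (k+2) ^ (k+1)" and t2: "0 \<le> theta D r (k+1) ^ (k+1)"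
          using theta_pos[OF D r0] less_imp_le by blast+
        have p1: "0 \<le> b1 * (C * theta D r (k+2) ^ (k+1))"
          using b1 C t1 by simp
        have p2: "0 \<le> b1 * (b2 * theta D r (k+1) ^ (k+1))"
          using b1 b2 t2 by simp
        have p3: "0 \<le> C * \<delta> * (b1 * (b2 * theta D r (k+1) ^ (k+1)))"
          by (rule mult_nonneg_nonneg[OF C\<delta> p2])
        show ?thesis unfolding c_def using p1 p3 by linarith
      qed
      have Fb: "cmod (exp (g x) * f x - exp (g y) * f y) \<le> c"
        if xy: "x \<in> S" "y \<in> S" "\<forall>j<Suc k. x j = y j" for x y
      proof -
        have id: "exp (g x) * f x - exp (g y) * f y = exp (g x) * (f x - f y) + f y * (exp (g x) - exp (g y))"
          by (simp add: algebra_simps)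
        have e1: "cmod (exp (g x)) \<le> b1" using gb xy by (simp add: norm_exp_eq_Re)
        have f1: "cmod (f x - f y) \<le> C * theta D r (k+2) ^ (k+1)"
          using fvar[OF xy(1,2,3)] km by simp
        have gdiff: "cmod (g x - g y) \<le> b2 * theta D r (k+1) ^ (k+1)"
          using var_ge[OF bdg xy(1,2,3)] gvar[rule_format, of "Suc k"] by simp
        have e2: "cmod (exp (g x) - exp (g y)) \<le> b1 * (b2 * theta D r (k+1) ^ (k+1))"
          using exp_diff[OF gRe[OF xy(1)] gRe[OF xy(2)] b1] gdiff b1
          by (meson mult_left_mono less_imp_le order_trans)
        have "cmod (exp (g x) * f x - exp (g y) * f y) \<le> cmod (exp (g x)) * cmod (f x - f y) + cmod (f y) * cmod (exp (g x) - exp (g y))"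
          unfolding id by (metis norm_mult norm_triangle_ineq)
        also have "\<dots> \<le> b1 * (C * theta D r (k+2) ^ (k+1)) + C * \<delta> * (b1 * (b2 * theta D r (k+1) ^ (k+1)))"
        proof (rule add_mono)
          show "cmod (exp (g x)) * cmod (f x - f y) \<le> b1 * (C * theta D r (k+2) ^ (k+1))"
            by (rule mult_mono[OF e1 f1]) (use b1 in auto)
          show "cmod (f y) * cmod (exp (g x) - exp (g y)) \<le> C * \<delta> * (b1 * (b2 * theta D r (k+1) ^ (k+1)))"
            by (rule mult_mono[OF fsup[OF xy(2)] e2]) (use C\<delta> in auto)
        qed
        finally show ?thesis unfolding c_def .
      qed
      have cb: "c \<le> b1 * C * \<rho> * \<Theta> * (D + E * b2)"
      proof -
        have t1: "b1 * (C * theta D r (k+2) ^ (k+1)) \<le> b1 * (C * (D * \<rho> * \<Theta>))"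
          using N2[OF km D r0 r1] b1 C unfolding \<rho>_def \<Theta>_def by (intro mult_left_mono) auto
        have t2: "C * \<delta> * (b1 * (b2 * theta D r (k+1) ^ (k+1))) \<le> C * (E * \<rho>) * (b1 * (b2 * \<Theta>))"
        proof (rule mult_mono)
          show "C * \<delta> \<le> C * (E * \<rho>)" by (rule mult_left_mono[OF dE C])
          have "b2 * theta D r (k+1) ^ (k+1) \<le> b2 * \<Theta>"
            unfolding \<Theta>_def by (rule mult_left_mono[OF N3[OF km D r0 r1 Dm]]) (use b2 in auto)
          then show "b1 * (b2 * theta D r (k+1) ^ (k+1)) \<le> b1 * (b2 * \<Theta>)"
            by (rule mult_left_mono) (use b1 in auto)
          show "0 \<le> C * (E * \<rho>)" using C E0 rho0 by simp
          show "0 \<le> b1 * (b2 * theta D r (k+1) ^ (k+1))" using b1 b2 theta_pos[OF D r0, of "k+1" "k+1"] by simp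
        qed
        have "c \<le> b1 * (C * (D * \<rho> * \<Theta>)) + C * (E * \<rho>) * (b1 * (b2 * \<Theta>))"
          unfolding c_def using t1 t2 by linarith
        also have "\<dots> = b1 * C * \<rho> * \<Theta> * (D + E * b2)" by (simp add: algebra_simps)
        finally show ?thesis .
      qed
      show "var S k (transfer S g \<psi> - Kop \<mu> S g m \<psi>) \<le> a * C * \<rho> * \<Theta>"
      proof (rule var_le[OF Sne])
        fix x y assume xy: "x \<in> S" "y \<in> S" "\<forall>j<k. x j = y j"
        have "cmod (transfer S g f x - transfer S g f y) \<le> real N * c"
          using transfer_var[of x N A y k g f c] xy SA k1 Fb c0 by blast
        also have "\<dots> \<le> real N * (b1 * C * \<rho> * \<Theta> * (D + E * b2))"
          using cb by (intro mult_left_mono) auto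
        also have "\<dots> = (real N * b1 * (D + E * b2)) * C * \<rho> * \<Theta>" by (simp add: algebra_simps)
        also have "\<dots> \<le> a * C * \<rho> * \<Theta>"
          using a0(2) C rho0 Th0 by (intro mult_right_mono) auto
        finally show "cmod ((transfer S g \<psi> - Kop \<mu> S g m \<psi>) x - (transfer S g \<psi> - Kop \<mu> S g m \<psi>) y) \<le> a * C * \<rho> * \<Theta>"
          unfolding Tf .
      qed
    qed
  qed
qed



lemma V_from_bounds:
  assumes Sne: "S \<noteq> {}" and bd: "bounded (\<phi> ` S)"
    and v: "\<forall>k. var S k \<phi> \<le> c * theta D r (k+1) ^ k" and c: "c \<ge> 0"
    and D: "D > 0" and r0: "0 < r" and r1: "r < 1"
  shows "\<phi> \<in> Vspace S"
proof -
  define t where "t k = D * r^(k+1)" for k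
  have t0: "t k > 0" for k using D r0 by (simp add: t_def)
  have up: "var S k \<phi> powr (1 / real k) \<le> root k (c+1) * t k" if k: "k \<ge> 1" for k
  proof -
    have v0: "0 \<le> var S k \<phi>" by (rule var_nonneg[OF bd Sne])
    have "var S k \<phi> \<le> (c+1) * t k ^ k"
    proof -
      have "c * theta D r (k+1) ^ k \<le> (c+1) * t k ^ k"
      proof -
        have e: "theta D r (k+1) = t k" by (simp add: t_def theta_def)
        have "0 \<le> t k ^ k" using t0[of k] by simp
        then show ?thesis unfolding e by (rule mult_right_mono[rotated]) simp
      qed
      then show ?thesis using v by (meson order_trans)
    qed
    then have "var S k \<phi> powr (1 / real k) \<le> ((c+1) * t k ^ k) powr (1 / real k)"
      using v0 by (intro powr_mono2) auto
    also have "\<dots> = root k ((c+1) * t k ^ k)"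
      using k c t0[of k] by (subst root_powr_inverse) auto
    also have "\<dots> = root k (c+1) * t k"
      using k t0[of k] by (simp add: real_root_mult real_root_power_cancel less_imp_le)
    finally show ?thesis .
  qed
  have lo: "0 \<le> var S k \<phi> powr (1 / real k)" for k by simp
  have lim1: "(\<lambda>k. root k (c+1)) \<longlonglongrightarrow> 1" using c by (intro LIMSEQ_root_const) auto
  have "(\<lambda>k. D * (r * r^k)) \<longlonglongrightarrow> D * (r * 0)"
    using r0 r1 by (intro tendsto_mult tendsto_const LIMSEQ_power_zero) auto
  then have lim2: "t \<longlonglongrightarrow> 0" unfolding t_def by simp
  have lim: "(\<lambda>k. root k (c+1) * t k) \<longlonglongrightarrow> 1 * 0"
    by (rule tendsto_mult[OF lim1 lim2])
  have "(\<lambda>k. var S k \<phi> powr (1 / real k)) \<longlonglongrightarrow> 0"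
  proof (rule tendsto_sandwich[of "\<lambda>_. 0" _ _ "\<lambda>k. root k (c+1) * t k"])
    show "\<forall>\<^sub>F n in sequentially. 0 \<le> var S n \<phi> powr (1 / real n)" using lo by simp
    show "\<forall>\<^sub>F n in sequentially. var S n \<phi> powr (1 / real n) \<le> root n (c+1) * t n"
      using eventually_ge_at_top[of "1::nat"] by (rule eventually_mono) (rule up)
  qed (use lim in auto)
  then show ?thesis using bd unfolding Vspace_def by auto
qed

lemma Bnorm_step:
  assumes Sne: "S \<noteq> {}" and psi: "\<psi> \<in> Bspace S D r" and b: "b > 0"
    and D: "D > 0" and r0: "0 < r" and r1: "r < 1"
    and H: "\<And>C. C \<ge> 0 \<Longrightarrow> \<forall>k. var S k \<psi> \<le> C * theta D r (k+1) ^ k \<Longrightarrow>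
            (\<forall>\<omega>\<in>S. cmod (hh \<omega>) \<le> b * C) \<and> (\<forall>k. var S k hh \<le> b * C * theta D r (k+1) ^ k)"
  shows "hh \<in> Bspace S D r \<and> Bnorm S D r hh \<le> 2 * b * Bnorm S D r \<psi>"
proof -
  define Cs where "Cs = {C. C \<ge> 0 \<and> (\<forall>k. var S k \<psi> \<le> C * theta D r (k+1) ^ k)}"
  define Cx where "Cx = {C. C \<ge> 0 \<and> (\<forall>k. var S k hh \<le> C * theta D r (k+1) ^ k)}"
  obtain C0 where C0: "C0 \<in> Cs" using psi unfolding Bspace_def Cs_def by auto
  have bdpsi: "bounded (\<psi> ` S)" using psi unfolding Bspace_def Vspace_def by auto
  have H0: "(\<forall>\<omega>\<in>S. cmod (hh \<omega>) \<le> b * C0) \<and> (\<forall>k. var S k hh \<le> b * C0 * theta D r (k+1) ^ k)"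
    using H C0 unfolding Cs_def by auto
  have bdchi: "bounded (hh ` S)" using H0 by (auto simp: bounded_iff)
  have bC0: "b * C0 \<ge> 0" using b C0 unfolding Cs_def by simp
  have chiV: "hh \<in> Vspace S" using V_from_bounds[OF Sne bdchi _ bC0 D r0 r1] H0 by auto
  have chiB: "hh \<in> Bspace S D r" unfolding Bspace_def using chiV H0 bC0 by auto
  have key: "Bnorm S D r hh \<le> 2 * b * C" if C: "C \<in> Cs" for C
  proof -
    have HC: "(\<forall>\<omega>\<in>S. cmod (hh \<omega>) \<le> b * C) \<and> (\<forall>k. var S k hh \<le> b * C * theta D r (k+1) ^ k)"
      using H C unfolding Cs_def by auto
    have s: "supnorm S hh \<le> b * C" unfolding supnorm_def
      using HC Sne by (intro cSUP_least) auto
    have i: "Inf Cx \<le> b * C"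
    proof (rule cInf_lower)
      show "b * C \<in> Cx" unfolding Cx_def using HC b C unfolding Cs_def by auto
      show "bdd_below Cx" unfolding Cx_def by (rule bdd_belowI[of _ 0]) auto
    qed
    show ?thesis unfolding Bnorm_def Cx_def[symmetric] using s i by linarith
  qed
  have "Bnorm S D r hh / (2 * b) \<le> Inf Cs"
  proof (rule cInf_greatest)
    show "Cs \<noteq> {}" using C0 by auto
    fix C assume "C \<in> Cs"
    then show "Bnorm S D r hh / (2 * b) \<le> C" using key b by (simp add: divide_le_eq mult.commute)
  qed
  moreover have "supnorm S \<psi> \<ge> 0"
  proof -
    obtain w where w: "w \<in> S" using Sne by auto
    have "bdd_above ((\<lambda>x. cmod (\<psi> x)) ` S)" using bdpsi
      by (auto simp: bounded_iff bdd_above_def)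
    then have "cmod (\<psi> w) \<le> supnorm S \<psi>" unfolding supnorm_def using w by (rule cSUP_upper2) simp
    then show ?thesis by (meson norm_ge_zero order_trans)
  qed
  ultimately have "Bnorm S D r hh / (2 * b) \<le> Bnorm S D r \<psi>"
    unfolding Bnorm_def Cs_def by linarith
  then have "Bnorm S D r hh \<le> 2 * b * Bnorm S D r \<psi>" using b by (simp add: divide_le_eq mult.commute)
  then show ?thesis using chiB by simp
qed


theorem lemma5p1:
  fixes N :: nat and A :: "nat \<Rightarrow> nat \<Rightarrow> bool" and D r b1 b2 :: real
  assumes "N \<ge> 1" and "aperiodic N A"
    and "D > 0" and "0 < r" and "r < 1" and "b1 > 0" and "b2 > 0"
  shows "\<exists>C4>0. \<forall>\<mu> m q g.
           admissible_measure (Sigma_A N A) \<mu> \<longrightarrow> m \<ge> 2 \<longrightarrow> q \<ge> 1 \<longrightarrow> D * r ^ (m + 1) \<le> 1 \<longrightarrow>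
           condH (Sigma_A N A) D r b1 b2 g \<longrightarrow>
           (\<forall>\<phi>\<in>Bspace (Sigma_A N A) D r.
              (transfer (Sigma_A N A) g ^^ q) \<phi> - Kq \<mu> (Sigma_A N A) g m q \<phi> \<in> Bspace (Sigma_A N A) D r
            \<and> Bnorm (Sigma_A N A) D r ((transfer (Sigma_A N A) g ^^ q) \<phi> - Kq \<mu> (Sigma_A N A) g m q \<phi>)
                \<le> C4 ^ q * (r ^ (2 * m)) ^ q * Bnorm (Sigma_A N A) D r \<phi>)"
proof -
  note N1 = assms(1) and D = assms(3) and r0 = assms(4) and r1 = assms(5) and b1 = assms(6) and b2 = assms(7)
  define S where "S = Sigma_A N A"
  define a where "a = real N * b1 * (2*(D+D^2) + D + (D+D^2)*b2)"
  have a0: "a > 0" unfolding a_def using N1 b1 b2 D by (intro mult_pos_pos add_pos_nonneg) auto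
  show ?thesis unfolding S_def[symmetric]
  proof (intro exI[of _ "2*a"] conjI allI impI ballI)
    show "0 < 2*a" using a0 by simp
    fix \<mu> :: "(nat \<Rightarrow> nat) measure" and m q :: nat and g \<phi> :: "(nat \<Rightarrow> nat) \<Rightarrow> complex"
    assume adm: "admissible_measure S \<mu>" and m2: "2 \<le> m" and q: "1 \<le> q" and Dm: "D * r ^ (m + 1) \<le> 1"
      and H: "condH S D r b1 b2 g" and phi: "\<phi> \<in> Bspace S D r"
    define T where "T = (\<lambda>\<psi>. transfer S g \<psi> - Kop \<mu> S g m \<psi>)"
    define \<rho> where "\<rho> = r^(2*m)"
    have rho0: "\<rho> > 0" using r0 by (simp add: \<rho>_def)
    have Sne: "S \<noteq> {}" by (rule adm_nonempty[OF adm])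
    have step: "T \<psi> \<in> Bspace S D r \<and> Bnorm S D r (T \<psi>) \<le> 2 * (a * \<rho>) * Bnorm S D r \<psi>"
      if psi: "\<psi> \<in> Bspace S D r" for \<psi>
    proof (rule Bnorm_step[OF Sne psi _ D r0 r1])
      show "a * \<rho> > 0" using a0 rho0 by simp
      fix C assume C: "C \<ge> 0" and Cv: "\<forall>k. var S k \<psi> \<le> C * theta D r (k+1) ^ k"
      have V: "\<psi> \<in> Vspace S" using psi unfolding Bspace_def by auto
      note sc = step_core[OF S_def D r0 r1 b1 b2 adm m2 Dm H V C Cv]
      show "(\<forall>\<omega>\<in>S. cmod (T \<psi> \<omega>) \<le> a * \<rho> * C) \<and> (\<forall>k. var S k (T \<psi>) \<le> a * \<rho> * C * theta D r (k+1) ^ k)"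
        using sc unfolding T_def a_def[symmetric] \<rho>_def[symmetric] by (simp add: mult_ac)
    qed
    have iter: "(T ^^ n) \<phi> \<in> Bspace S D r \<and> Bnorm S D r ((T ^^ n) \<phi>) \<le> (2*a) ^ n * \<rho> ^ n * Bnorm S D r \<phi>" for n
    proof (induction n)
      case 0 then show ?case using phi by simp
    next
      case (Suc n)
      have s: "(T ^^ Suc n) \<phi> = T ((T ^^ n) \<phi>)" by simp
      have st: "T ((T ^^ n) \<phi>) \<in> Bspace S D r" "Bnorm S D r (T ((T ^^ n) \<phi>)) \<le> 2 * (a * \<rho>) * Bnorm S D r ((T ^^ n) \<phi>)"
        using step Suc.IH by blast+
      have "2 * (a * \<rho>) * Bnorm S D r ((T ^^ n) \<phi>) \<le> 2 * (a * \<rho>) * ((2*a) ^ n * \<rho> ^ n * Bnorm S D r \<phi>)"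
        using Suc.IH a0 rho0 by (intro mult_left_mono) auto
      also have "\<dots> = (2*a) ^ Suc n * \<rho> ^ Suc n * Bnorm S D r \<phi>" by (simp add: mult_ac)
      finally show ?case using st s by simp
    qed
    have eq: "(transfer S g ^^ q) \<phi> - Kq \<mu> S g m q \<phi> = (T ^^ q) \<phi>"
      unfolding Kq_def T_def by (simp add: fun_eq_iff)
    show "(transfer S g ^^ q) \<phi> - Kq \<mu> S g m q \<phi> \<in> Bspace S D r"
      using iter[of q] eq by simp
    show "Bnorm S D r ((transfer S g ^^ q) \<phi> - Kq \<mu> S g m q \<phi>) \<le> (2*a) ^ q * (r ^ (2 * m)) ^ q * Bnorm S D r \<phi>"
      using iter[of q] eq unfolding \<rho>_def by simp
  qed
qed

end
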